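(* Let $A=\{a_1^{k_1},\ldots,a_n^{k_n}\}$, $m\ge0$, $r=\max(k_1,\ldots,k_n)$, $s=\min(m,r)$, and let $\Lambda_m(A)$ be the set of tuples $(\lambda_1,\ldots,\lambda_s)$ of non-negative integers with $\sum_{i=1}^s i\lambda_i=m$ and $\sum_{i=j}^s\lambda_i\le\overline{k_j}$ for $j=1,\ldots,s$. Then the number of $m$-permutations of $A$ is $$|P_m(A)|=\sum_{\lambda\in\Lambda_m(A)}\frac{m!}{(1!)^{\lambda_1}(2!)^{\lambda_2}\cdots(s!)^{\lambda_s}}\prod_{j=1}^s\binom{\overline{k_j}-\sum_{i=j+1}^s\lambda_i}{\lambda_j}.$$
   Context: A multiset $A=\{a_1^{k_1},\ldots,a_n^{k_n}\}$ consists of distinct elements $a_1,\ldots,a_n$ with positive integer multiplicities $k_1,\ldots,k_n$. $P_m(A)$, the set of $m$-permutations of $A$, is the set of all sequences (words) of length $m$ over $\{a_1,\ldots,a_n\}$ in which each $a_i$ occurs at most $k_i$ times. For each integer $j\ge1$, $\overline{k_j}=|\{i\in\{1,\ldots,n\}: k_i\ge j\}|$. *)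

theory Defs
  imports Complex_Main
begin

text \<open>Multiset A = {a_0^(k 0), ..., a_(n-1)^(k (n-1))} with distinct elements a i.
  P_m(A): words of length m over {a i | i < n} with each a i occurring at most k i times.\<close>
definition mperms :: "(nat \<Rightarrow> 'a) \<Rightarrow> (nat \<Rightarrow> nat) \<Rightarrow> nat \<Rightarrow> nat \<Rightarrow> 'a list set" where
  "mperms a k n m = {w. length w = m \<and> set w \<subseteq> a ` {..<n} \<and>
                        (\<forall>i<n. count_list w (a i) \<le> k i)}"

definition kbar :: "(nat \<Rightarrow> nat) \<Rightarrow> nat \<Rightarrow> nat \<Rightarrow> nat" where
  "kbar k n j = card {i. i < n \<and> k i \<ge> j}"

definition Lam :: "(nat \<Rightarrow> nat) \<Rightarrow> nat \<Rightarrow> nat \<Rightarrow> nat \<Rightarrow> (nat \<Rightarrow> nat) set" where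
  "Lam k n m s = {l. (\<forall>i. i \<notin> {1..s} \<longrightarrow> l i = 0) \<and>
                     (\<Sum>i=1..s. i * l i) = m \<and>
                     (\<forall>j\<in>{1..s}. (\<Sum>i=j..s. l i) \<le> kbar k n j)}"

end

theory Submission imports Defs "HOL-Combinatorics.Multiset_Permutations" "HOL-Library.FuncSet" begin

definition XX :: "nat set \<Rightarrow> (nat\<Rightarrow>nat) \<Rightarrow> (nat\<Rightarrow>nat) \<Rightarrow> nat \<Rightarrow> (nat\<Rightarrow>nat) set" where
"XX I k l s = {c \<in> I \<rightarrow>\<^sub>E {0..s}. (\<forall>i\<in>I. c i \<le> k i) \<and> (\<forall>j\<in>{1..s}. card {i\<in>I. c i = j} = l j)}"

lemma finite_XX: "finite I \<Longrightarrow> finite (XX I k l s)"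
  unfolding XX_def by (rule finite_subset[of _ "I \<rightarrow>\<^sub>E {0..s}"]) (auto intro: finite_PiE)

lemma XX_0: "XX I k l 0 = {restrict (\<lambda>_. 0) I}"
  unfolding XX_def by (auto simp: PiE_def extensional_def restrict_def fun_eq_iff)

lemma piece_bij:
  assumes I: "finite I" and S: "S \<subseteq> {i\<in>I. Suc s \<le> k i}" and cS: "card S = l (Suc s)"
  shows "bij_betw (\<lambda>c. restrict c (I - S)) {c\<in>XX I k l (Suc s). {i\<in>I. c i = Suc s} = S} (XX (I - S) k l s)"
proof (rule bij_betw_byWitness[where f' = "\<lambda>c' i. if i \<in> S then Suc s else c' i"])
  show "\<forall>c\<in>{c\<in>XX I k l (Suc s). {i\<in>I. c i = Suc s} = S}. (\<lambda>i. if i \<in> S then Suc s else restrict c (I - S) i) = c"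
  proof
    fix c assume c: "c \<in> {c\<in>XX I k l (Suc s). {i\<in>I. c i = Suc s} = S}"
    show "(\<lambda>i. if i \<in> S then Suc s else restrict c (I - S) i) = c"
    proof
      fix i show "(if i \<in> S then Suc s else restrict c (I - S) i) = c i"
        using c S by (cases "i \<in> I") (auto simp: XX_def PiE_def extensional_def)
    qed
  qed
  show "\<forall>c'\<in>XX (I - S) k l s. restrict (\<lambda>i. if i \<in> S then Suc s else c' i) (I - S) = c'"
    by (auto simp: XX_def PiE_def extensional_def restrict_def fun_eq_iff)
  show "(\<lambda>c. restrict c (I - S)) ` {c\<in>XX I k l (Suc s). {i\<in>I. c i = Suc s} = S} \<subseteq> XX (I - S) k l s"
  proof
    fix d assume "d \<in> (\<lambda>c. restrict c (I - S)) ` {c\<in>XX I k l (Suc s). {i\<in>I. c i = Suc s} = S}"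
    then obtain c where d: "d = restrict c (I - S)" and c: "c \<in> XX I k l (Suc s)" and g: "{i\<in>I. c i = Suc s} = S"
      by auto
    have 1: "d \<in> (I - S) \<rightarrow>\<^sub>E {0..s}"
    proof -
      have "\<forall>i\<in>I - S. c i \<in> {0..s}"
      proof
        fix i assume i: "i \<in> I - S"
        then have "c i \<le> Suc s" using c by (auto simp: XX_def PiE_def Pi_def)
        moreover have "c i \<noteq> Suc s" using i g by auto
        ultimately show "c i \<in> {0..s}" by auto
      qed
      thus ?thesis unfolding d by auto
    qed
    have 2: "\<forall>j\<in>{1..s}. card {i\<in>I - S. d i = j} = l j"
    proof
      fix j assume j: "j \<in> {1..s}"
      have "{i\<in>I - S. d i = j} = {i\<in>I. c i = j}" using j g d by auto
      thus "card {i\<in>I - S. d i = j} = l j" using c j by (auto simp: XX_def)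
    qed
    show "d \<in> XX (I - S) k l s" using 1 2 c d by (auto simp: XX_def)
  qed
  show "(\<lambda>c' i. if i \<in> S then Suc s else c' i) ` XX (I - S) k l s \<subseteq> {c\<in>XX I k l (Suc s). {i\<in>I. c i = Suc s} = S}"
  proof
    fix c assume "c \<in> (\<lambda>c' i. if i \<in> S then Suc s else c' i) ` XX (I - S) k l s"
    then obtain d where c: "c = (\<lambda>i. if i \<in> S then Suc s else d i)" and d: "d \<in> XX (I - S) k l s" by auto
    have dI: "d \<in> (I - S) \<rightarrow>\<^sub>E {0..s}" and dk: "\<forall>i\<in>I-S. d i \<le> k i"
      and dl: "\<forall>j\<in>{1..s}. card {i\<in>I - S. d i = j} = l j" using d by (auto simp: XX_def)
    have g: "{i\<in>I. c i = Suc s} = S"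
    proof -
      have "\<forall>i\<in>I - S. d i \<le> s" using dI by auto
      thus ?thesis using S c by force
    qed
    have 1: "c \<in> I \<rightarrow>\<^sub>E {0..Suc s}" using dI S c by (auto simp: PiE_def Pi_def extensional_def)
    have 2: "\<forall>i\<in>I. c i \<le> k i" using dk S c by auto
    have 3: "\<forall>j\<in>{1..Suc s}. card {i\<in>I. c i = j} = l j"
    proof
      fix j assume j: "j \<in> {1..Suc s}"
      show "card {i\<in>I. c i = j} = l j"
      proof (cases "j = Suc s")
        case True
        then show ?thesis using g cS by simp
      next
        case False
        then have "{i\<in>I. c i = j} = {i\<in>I - S. d i = j}" using c j by auto
        then show ?thesis using dl j False by auto
      qed
    qed
    show "c \<in> {c\<in>XX I k l (Suc s). {i\<in>I. c i = Suc s} = S}" using 1 2 3 g by (auto simp: XX_def)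
  qed
qed

lemma count_XX:
  assumes "finite I"
  shows "card (XX I k l s) = (\<Prod>j=1..s. (card {i\<in>I. j \<le> k i} - (\<Sum>t=j+1..s. l t)) choose l j)"
  using assms
proof (induction s arbitrary: I)
  case 0
  then show ?case by (simp add: XX_0)
next
  case (Suc s)
  define K where "K = {i\<in>I. Suc s \<le> k i}"
  define T where "T = {S. S \<subseteq> K \<and> card S = l (Suc s)}"
  define P where "P = (\<Prod>j=1..s. (card {i\<in>I. j \<le> k i} - (\<Sum>t=j+1..Suc s. l t)) choose l j)"
  have fK: "finite K" using Suc.prems K_def by auto
  have fT: "finite T" unfolding T_def using fK by auto
  have gT: "(\<lambda>c. {i\<in>I. c i = Suc s}) ` XX I k l (Suc s) \<subseteq> T"
  proof
    fix S assume "S \<in> (\<lambda>c. {i\<in>I. c i = Suc s}) ` XX I k l (Suc s)"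
    then obtain c where c: "c \<in> XX I k l (Suc s)" and S: "S = {i\<in>I. c i = Suc s}" by auto
    have "S \<subseteq> K" using c S unfolding K_def XX_def by force
    moreover have "card S = l (Suc s)" using c S unfolding XX_def by auto
    ultimately show "S \<in> T" unfolding T_def by auto
  qed
  have "card (XX I k l (Suc s)) = (\<Sum>S\<in>T. card {c\<in>XX I k l (Suc s). {i\<in>I. c i = Suc s} = S})"
    using sum.group[OF finite_XX[OF Suc.prems] fT gT, of "\<lambda>_. 1::nat"] by simp
  also have "\<dots> = (\<Sum>S\<in>T. P)"
  proof (rule sum.cong[OF refl])
    fix S assume ST: "S \<in> T"
    then have SK: "S \<subseteq> K" and cS: "card S = l (Suc s)" unfolding T_def by auto
    have "card {c\<in>XX I k l (Suc s). {i\<in>I. c i = Suc s} = S} = card (XX (I - S) k l s)"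
      using piece_bij[OF Suc.prems, of S s k l] SK cS K_def bij_betw_same_card by blast
    also have "\<dots> = (\<Prod>j=1..s. (card {i\<in>I - S. j \<le> k i} - (\<Sum>t=j+1..s. l t)) choose l j)"
      using Suc.IH Suc.prems by auto
    also have "\<dots> = P" unfolding P_def
    proof (rule prod.cong[OF refl])
      fix j assume j: "j \<in> {1..s}"
      have SI: "S \<subseteq> {i\<in>I. j \<le> k i}" using SK j K_def by auto
      have "{i\<in>I - S. j \<le> k i} = {i\<in>I. j \<le> k i} - S" by auto
      then have "card {i\<in>I - S. j \<le> k i} = card {i\<in>I. j \<le> k i} - card S"
        using SI Suc.prems by (simp add: card_Diff_subset finite_subset)
      moreover have "(\<Sum>t=j+1..Suc s. l t) = (\<Sum>t=j+1..s. l t) + l (Suc s)"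
        using j by simp
      ultimately show "(card {i\<in>I - S. j \<le> k i} - (\<Sum>t=j+1..s. l t)) choose l j =
          (card {i\<in>I. j \<le> k i} - (\<Sum>t=j+1..Suc s. l t)) choose l j"
        using cS by (simp add: add.commute)
    qed
    finally show "card {c\<in>XX I k l (Suc s). {i\<in>I. c i = Suc s} = S} = P" .
  qed
  also have "\<dots> = (card K choose l (Suc s)) * P"
    using n_subsets[OF fK] T_def by simp
  also have "\<dots> = (\<Prod>j=1..Suc s. (card {i\<in>I. j \<le> k i} - (\<Sum>t=j+1..Suc s. l t)) choose l j)"
    unfolding P_def K_def by (simp add: prod.cl_ivl_Suc)
  finally show ?case .
qed

lemma sum_by_values:
  assumes N: "finite N" and c: "c \<in> N \<rightarrow>\<^sub>E {0..s}"
  shows "(\<Sum>i\<in>N. c i) = (\<Sum>j=1..s. j * card {i\<in>N. c i = j})"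
proof -
  have cs: "c ` N \<subseteq> {0..s}" using c by auto
  have "(\<Sum>i\<in>N. c i) = (\<Sum>j\<in>{0..s}. \<Sum>i\<in>{i\<in>N. c i = j}. c i)"
    by (rule sum.group[OF N finite_atLeastAtMost cs, symmetric])
  also have "\<dots> = (\<Sum>j\<in>{0..s}. j * card {i\<in>N. c i = j})"
    by (rule sum.cong) auto
  also have "\<dots> = (\<Sum>j=1..s. j * card {i\<in>N. c i = j})"
    by (simp add: sum.atLeast_Suc_atMost)
  finally show ?thesis .
qed

lemma prod_by_values:
  assumes N: "finite N" and c: "c \<in> N \<rightarrow>\<^sub>E {0..s}"
  shows "(\<Prod>i\<in>N. fact (c i) :: nat) = (\<Prod>j=1..s. fact j ^ card {i\<in>N. c i = j})"
proof -
  have cs: "c ` N \<subseteq> {0..s}" using c by auto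
  have "(\<Prod>i\<in>N. fact (c i) :: nat) = (\<Prod>j\<in>{0..s}. \<Prod>i\<in>{i\<in>N. c i = j}. fact (c i))"
    by (rule prod.group[OF N finite_atLeastAtMost cs, symmetric])
  also have "\<dots> = (\<Prod>j\<in>{0..s}. fact j ^ card {i\<in>N. c i = j})"
    by (rule prod.cong) auto
  also have "\<dots> = (\<Prod>j=1..s. fact j ^ card {i\<in>N. c i = j})"
    by (simp add: prod.atLeast_Suc_atMost)
  finally show ?thesis .
qed

lemma card_ge_values:
  fixes c :: "'x \<Rightarrow> nat"
  assumes N: "finite N" and c: "c \<in> N \<rightarrow>\<^sub>E {0..s}" and j: "j \<ge> 1"
  shows "(\<Sum>t=j..s. card {i\<in>N. c i = t}) = card {i\<in>N. j \<le> c i}"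
proof -
  let ?S = "{i\<in>N. j \<le> c i}"
  have fS: "finite ?S" using N by auto
  have cs: "c ` ?S \<subseteq> {j..s}" using c by auto
  have "card ?S = (\<Sum>t\<in>{j..s}. \<Sum>i\<in>{i\<in>?S. c i = t}. 1)"
    using sum.group[OF fS _ cs, of "\<lambda>_. 1::nat"] by auto
  also have "\<dots> = (\<Sum>t=j..s. card {i\<in>N. c i = t})"
    by (rule sum.cong) (auto intro!: arg_cong[where f=card])
  finally show ?thesis by simp
qed

theorem theorem7p1:
  fixes a :: "nat \<Rightarrow> 'a" and k :: "nat \<Rightarrow> nat" and n m :: nat
  assumes "n \<ge> 1"
    and "inj_on a {..<n}"
    and "\<forall>i<n. k i > 0"
  defines "r \<equiv> Max (k ` {..<n})"
  defines "s \<equiv> min m r"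
  shows "(of_nat (card (mperms a k n m)) :: rat) =
    (\<Sum>l\<in>Lam k n m s.
       (fact m / (\<Prod>i=1..s. (fact i) ^ (l i))) *
       (\<Prod>j=1..s. of_nat ((kbar k n j - (\<Sum>i=j+1..s. l i)) choose (l j))))"
proof -
  define N where "N = {..<n}"
  have fN: "finite N" unfolding N_def by simp
  have inj: "inj_on a N" using assms(2) N_def by simp
  define C where "C = {c \<in> N \<rightarrow>\<^sub>E {0..s}. (\<forall>i\<in>N. c i \<le> k i) \<and> (\<Sum>i\<in>N. c i) = m}"
  have fC: "finite C" unfolding C_def by (rule finite_subset[of _ "N \<rightarrow>\<^sub>E {0..s}"]) (auto intro: finite_PiE fN)
  define M where "M c = (\<Sum>i\<in>N. replicate_mset (c i) (a i))" for c :: "nat \<Rightarrow> nat"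
  have countM: "count (M c) (a j) = c j" if "j \<in> N" for c j
  proof -
    have "count (M c) (a j) = (\<Sum>i\<in>N. if a i = a j then c i else 0)"
      unfolding M_def count_sum by (intro sum.cong) auto
    also have "\<dots> = (\<Sum>i\<in>N. if i = j then c i else 0)"
      using inj that by (intro sum.cong) (auto dest: inj_onD)
    also have "\<dots> = c j" using that fN by simp
    finally show ?thesis .
  qed
  have countM0: "count (M c) x = 0" if "x \<notin> a ` N" for c x
    unfolding M_def count_sum using that by (intro sum.neutral) auto
  have sizeM: "size (M c) = (\<Sum>i\<in>N. c i)" for c unfolding M_def by simp
  have setM: "set_mset (M c) \<subseteq> a ` N" for c
    using countM0 by (metis count_eq_zero_iff subsetI)
  have kr: "k i \<le> r" if "i \<in> N" for i
    unfolding r_def using that N_def by (intro Max_ge) auto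
  have union: "mperms a k n m = (\<Union>c\<in>C. permutations_of_multiset (M c))"
  proof (intro equalityI subsetI)
    fix w assume w: "w \<in> mperms a k n m"
    then have lw: "length w = m" and sw: "set w \<subseteq> a ` N" and kw: "\<forall>i\<in>N. count_list w (a i) \<le> k i"
      unfolding mperms_def N_def by auto
    define c where "c = restrict (\<lambda>i. count_list w (a i)) N"
    have mw: "mset w = M c"
    proof (rule multiset_eqI)
      fix x show "count (mset w) x = count (M c) x"
      proof (cases "x \<in> a ` N")
        case True
        then obtain j where j: "j \<in> N" "x = a j" by auto
        then show ?thesis using countM[OF j(1)] by (simp add: c_def count_mset)
      next
        case False
        then have "x \<notin> set w" using sw by auto
        then show ?thesis using countM0[OF False] by (simp add: count_mset count_list_0_iff)
      qed
    qed
    have sumc: "(\<Sum>i\<in>N. c i) = m" using mw sizeM lw by (metis size_mset)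
    have cm: "c i \<le> m" if "i \<in> N" for i
      using sumc member_le_sum[OF that, of c] fN by simp
    have "c \<in> C" unfolding C_def
    proof (intro CollectI conjI ballI)
      show "c \<in> N \<rightarrow>\<^sub>E {0..s}"
      proof -
        have "\<forall>i\<in>N. c i \<le> s" using cm kw kr unfolding s_def c_def by (auto intro: order.trans)
        thus ?thesis unfolding c_def by auto
      qed
      show "\<And>i. i \<in> N \<Longrightarrow> c i \<le> k i" using kw c_def by auto
      show "(\<Sum>i\<in>N. c i) = m" by (rule sumc)
    qed
    then show "w \<in> (\<Union>c\<in>C. permutations_of_multiset (M c))"
      using mw by (auto intro: permutations_of_multisetI)
  next
    fix w assume "w \<in> (\<Union>c\<in>C. permutations_of_multiset (M c))"
    then obtain c where c: "c \<in> C" and mw: "mset w = M c" by (auto dest: permutations_of_multisetD)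
    have "length w = m" using mw sizeM c C_def by (metis (mono_tags, lifting) mem_Collect_eq size_mset)
    moreover have "set w \<subseteq> a ` {..<n}" using setM mw N_def by (metis set_mset_mset)
    moreover have "\<forall>i<n. count_list w (a i) \<le> k i"
      using c countM mw unfolding C_def N_def by (metis (no_types, lifting) count_mset lessThan_iff mem_Collect_eq)
    ultimately show "w \<in> mperms a k n m" unfolding mperms_def by auto
  qed
  have disj: "permutations_of_multiset (M c1) \<inter> permutations_of_multiset (M c2) = {}"
    if "c1 \<in> C" "c2 \<in> C" "c1 \<noteq> c2" for c1 c2
  proof -
    have "M c1 \<noteq> M c2"
    proof
      assume eq: "M c1 = M c2"
      have "c1 = c2"
      proof
        fix i show "c1 i = c2 i"
        proof (cases "i \<in> N")
          case True then show ?thesis using countM eq by metis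
        next
          case False then show ?thesis using that unfolding C_def by (auto simp: PiE_def extensional_def)
        qed
      qed
      then show False using that by simp
    qed
    then show ?thesis by (auto simp: permutations_of_multiset_def)
  qed
  have cardU: "card (mperms a k n m) = (\<Sum>c\<in>C. card (permutations_of_multiset (M c)))"
    unfolding union using fC disj by (subst card_UN_disjoint) auto
  define lam where "lam c = (\<lambda>j. if j \<in> {1..s} then card {i\<in>N. c i = j} else 0)" for c :: "nat \<Rightarrow> nat"
  define g where "g l = (fact m / (\<Prod>i=1..s. (fact i) ^ (l i)) :: rat)" for l :: "nat \<Rightarrow> nat"
  have termc: "(of_nat (card (permutations_of_multiset (M c))) :: rat) = g (lam c)" if c: "c \<in> C" for c
  proof -
    have cE: "c \<in> N \<rightarrow>\<^sub>E {0..s}" using c C_def by auto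
    have "(\<Prod>x\<in>set_mset (M c). fact (count (M c) x) :: nat) = (\<Prod>x\<in>a ` N. fact (count (M c) x))"
      using setM countM0 fN by (intro prod.mono_neutral_left) (auto simp: not_in_iff)
    also have "\<dots> = (\<Prod>i\<in>N. fact (c i))"
      using inj countM by (simp add: prod.reindex)
    also have "\<dots> = (\<Prod>j=1..s. fact j ^ card {i\<in>N. c i = j})"
      by (rule prod_by_values[OF fN cE])
    also have "\<dots> = (\<Prod>j=1..s. fact j ^ lam c j)"
      unfolding lam_def by (intro prod.cong) auto
    finally have P: "(\<Prod>x\<in>set_mset (M c). fact (count (M c) x) :: nat) = (\<Prod>j=1..s. fact j ^ lam c j)" .
    have sz: "size (M c) = m" using sizeM c C_def by auto
    have "card (permutations_of_multiset (M c)) * (\<Prod>j=1..s. fact j ^ lam c j) = fact m"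
      using card_permutations_of_multiset_aux[of "M c"] P sz by simp
    then have "(of_nat (card (permutations_of_multiset (M c) ) * (\<Prod>j=1..s. fact j ^ lam c j)) :: rat) = of_nat (fact m)"
      by (rule arg_cong)
    then have "(of_nat (card (permutations_of_multiset (M c))) :: rat) * (\<Prod>j=1..s. fact j ^ lam c j) = fact m"
      by (simp add: of_nat_prod)
    moreover have "(\<Prod>j=1..s. fact j ^ lam c j :: rat) \<noteq> 0" by simp
    ultimately show ?thesis unfolding g_def by (simp add: field_simps)
  qed
  have lamC: "lam ` C \<subseteq> Lam k n m s"
  proof
    fix l assume "l \<in> lam ` C"
    then obtain c where c: "c \<in> C" and l: "l = lam c" by auto
    have cE: "c \<in> N \<rightarrow>\<^sub>E {0..s}" and ck: "\<forall>i\<in>N. c i \<le> k i" and cs: "(\<Sum>i\<in>N. c i) = m"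
      using c C_def by auto
    have 1: "(\<Sum>i=1..s. i * l i) = m"
      using sum_by_values[OF fN cE] cs l lam_def by simp
    have 2: "(\<Sum>i=j..s. l i) \<le> kbar k n j" if j: "j \<in> {1..s}" for j
    proof -
      have "(\<Sum>i=j..s. l i) = (\<Sum>t=j..s. card {i\<in>N. c i = t})"
        using l lam_def j by (intro sum.cong) auto
      also have "\<dots> = card {i\<in>N. j \<le> c i}" using card_ge_values[OF fN cE] j by simp
      also have "\<dots> \<le> card {i\<in>N. j \<le> k i}"
        using ck fN by (intro card_mono) auto
      also have "\<dots> = kbar k n j" unfolding kbar_def N_def by simp
      finally show ?thesis .
    qed
    have 0: "\<forall>i. i \<notin> {1..s} \<longrightarrow> l i = 0" using l lam_def by simp
    show "l \<in> Lam k n m s" unfolding Lam_def using 0 1 2 by blast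
  qed
  have fLam: "finite (Lam k n m s)"
  proof (rule finite_subset)
    show "Lam k n m s \<subseteq> (\<lambda>f j. if j \<in> {1..s} then f j else 0) ` ({1..s} \<rightarrow>\<^sub>E {0..m})"
    proof
      fix l assume l: "l \<in> Lam k n m s"
      then have z: "\<forall>i. i \<notin> {1..s} \<longrightarrow> l i = 0" and sm: "(\<Sum>i=1..s. i * l i) = m"
        unfolding Lam_def by auto
      have "l j \<le> m" if "j \<in> {1..s}" for j
      proof -
        have "j * l j \<le> m" using member_le_sum[OF that, of "\<lambda>i. i * l i"] sm by simp
        moreover have "l j \<le> j * l j" using that by simp
        ultimately show ?thesis by linarith
      qed
      then have "restrict l {1..s} \<in> {1..s} \<rightarrow>\<^sub>E {0..m}" by auto
      moreover have "l = (\<lambda>j. if j \<in> {1..s} then restrict l {1..s} j else 0)"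
        using z by auto
      ultimately show "l \<in> (\<lambda>f j. if j \<in> {1..s} then f j else 0) ` ({1..s} \<rightarrow>\<^sub>E {0..m})"
        by blast
    qed
    show "finite ((\<lambda>f j. if j \<in> {1..s} then f j else 0) ` ({1..s} \<rightarrow>\<^sub>E {0..m}))"
      by (intro finite_imageI finite_PiE) auto
  qed
  have fiber: "{c\<in>C. lam c = l} = XX N k l s" if l: "l \<in> Lam k n m s" for l
  proof (intro equalityI subsetI)
    fix c assume "c \<in> {c\<in>C. lam c = l}"
    then have c: "c \<in> C" and lc: "lam c = l" by auto
    have cE: "c \<in> N \<rightarrow>\<^sub>E {0..s}" and ck: "\<forall>i\<in>N. c i \<le> k i" using c C_def by auto
    have "\<forall>j\<in>{1..s}. card {i\<in>N. c i = j} = l j"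
    proof
      fix j assume "j \<in> {1..s}"
      then have "lam c j = card {i\<in>N. c i = j}" unfolding lam_def by simp
      then show "card {i\<in>N. c i = j} = l j" using lc by simp
    qed
    then show "c \<in> XX N k l s" unfolding XX_def using cE ck by blast
  next
    fix c assume c: "c \<in> XX N k l s"
    then have cE: "c \<in> N \<rightarrow>\<^sub>E {0..s}" and ck: "\<forall>i\<in>N. c i \<le> k i"
      and cl: "\<forall>j\<in>{1..s}. card {i\<in>N. c i = j} = l j" unfolding XX_def by auto
    have z: "\<forall>i. i \<notin> {1..s} \<longrightarrow> l i = 0" and sm: "(\<Sum>i=1..s. i * l i) = m"
      using l unfolding Lam_def by auto
    have "(\<Sum>i\<in>N. c i) = m" using sum_by_values[OF fN cE] cl sm by simp
    moreover have "lam c = l" unfolding lam_def using cl z by auto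
    ultimately show "c \<in> {c\<in>C. lam c = l}" using cE ck C_def by auto
  qed
  have "(of_nat (card (mperms a k n m)) :: rat) = (\<Sum>c\<in>C. g (lam c))"
    unfolding cardU of_nat_sum using termc by (intro sum.cong) auto
  also have "\<dots> = (\<Sum>l\<in>Lam k n m s. \<Sum>c\<in>{c\<in>C. lam c = l}. g (lam c))"
    by (rule sum.group[OF fC fLam lamC, symmetric])
  also have "\<dots> = (\<Sum>l\<in>Lam k n m s. g l * of_nat (card (XX N k l s)))"
  proof (intro sum.cong refl)
    fix l assume l: "l \<in> Lam k n m s"
    have "(\<Sum>c\<in>{c\<in>C. lam c = l}. g (lam c)) = (\<Sum>c\<in>{c\<in>C. lam c = l}. g l)"
      by (intro sum.cong) auto
    also have "\<dots> = g l * of_nat (card {c\<in>C. lam c = l})" by (simp add: mult.commute)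
    finally show "(\<Sum>c\<in>{c\<in>C. lam c = l}. g (lam c)) = g l * of_nat (card (XX N k l s))"
      using fiber[OF l] by simp
  qed
  also have "\<dots> = (\<Sum>l\<in>Lam k n m s.
       (fact m / (\<Prod>i=1..s. (fact i) ^ (l i))) *
       (\<Prod>j=1..s. of_nat ((kbar k n j - (\<Sum>i=j+1..s. l i)) choose (l j))))"
  proof (intro sum.cong refl)
    fix l
    have "card {i\<in>N. j \<le> k i} = kbar k n j" for j unfolding kbar_def N_def by simp
    then show "g l * of_nat (card (XX N k l s)) = (fact m / (\<Prod>i=1..s. (fact i) ^ (l i))) *
       (\<Prod>j=1..s. of_nat ((kbar k n j - (\<Sum>i=j+1..s. l i)) choose (l j)))"
      unfolding count_XX[OF fN] g_def of_nat_prod by simp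
  qed
  finally show ?thesis .
qed

end
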